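(* Let $(Z,M,\mu)$ be a measure space with a non-trivial atomless measure $\mu$, and let $2 < a < b < \infty$. Let $\psi:(a,b)\to(0,\infty]$ be a generating function with $\inf_{p\in(a,b)}\psi(p)>0$, and let $G\psi = G\psi[a,b]$ be the associated Grand Lebesgue Space with norm $\|f\|G\psi = \sup_{p\in(a,b)} \|f\|_p/\psi(p)$. For $u\in G\psi$ put $$\theta[G\psi[a,b]](u) := \inf_{p\in(a,b)} \frac{\|u\|_p^p}{p\cdot 2^p\cdot \psi^p(p)}.$$ Then for all $x,y$ in the closed unit ball $B[G\psi[a,b]] = \{f\in G\psi: \|f\|G\psi\le 1\}$, $$\|x+y\|G\psi \le 2 - \theta[G\psi[a,b]](x-y).$$
   Context: For a measurable $f:Z\to\mathbb{R}$ and $1\le p<\infty$, $\|f\|_p = \left(\int_Z |f(z)|^p\,\mu(dz)\right)^{1/p}$. Given $1\le a<b\le\infty$ and a function $\psi:(a,b)\to(0,\infty]$ (possibly infinite at some points) with $\inf_{p\in(a,b)}\psi(p)>0$, the Grand Lebesgue Space $G\psi[a,b]$ consists of all real measurable functions $f$ on $Z$ with finite norm $\|f\|G\psi[a,b] := \sup_{p\in(a,b)} \|f\|_p/\psi(p)$, using the convention $C/\infty := 0$. *)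

theory Defs
  imports "HOL-Analysis.Analysis"
begin

definition epowr :: "ennreal \<Rightarrow> real \<Rightarrow> ennreal" where
  "epowr x p = (if x = \<infinity> then \<infinity> else ennreal (enn2real x powr p))"

definition lp_norm :: "'a measure \<Rightarrow> real \<Rightarrow> ('a \<Rightarrow> real) \<Rightarrow> ennreal" where
  "lp_norm M p f = epowr (\<integral>\<^sup>+ z. ennreal (\<bar>f z\<bar> powr p) \<partial>M) (1 / p)"

text \<open>Grand Lebesgue Space norm; ennreal division gives C / \<infinity> = 0.\<close>
definition gls_norm :: "'a measure \<Rightarrow> real \<Rightarrow> real \<Rightarrow> (real \<Rightarrow> ennreal) \<Rightarrow> ('a \<Rightarrow> real) \<Rightarrow> ennreal" where
  "gls_norm M a b \<psi> f = (SUP p\<in>{a<..<b}. lp_norm M p f / \<psi> p)"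

definition GLS :: "'a measure \<Rightarrow> real \<Rightarrow> real \<Rightarrow> (real \<Rightarrow> ennreal) \<Rightarrow> ('a \<Rightarrow> real) set" where
  "GLS M a b \<psi> = {f. f \<in> borel_measurable M \<and> gls_norm M a b \<psi> f < \<infinity>}"

definition gls_theta :: "'a measure \<Rightarrow> real \<Rightarrow> real \<Rightarrow> (real \<Rightarrow> ennreal) \<Rightarrow> ('a \<Rightarrow> real) \<Rightarrow> ennreal" where
  "gls_theta M a b \<psi> u = (INF p\<in>{a<..<b}.
      epowr (lp_norm M p u) p / (ennreal p * ennreal (2 powr p) * epowr (\<psi> p) p))"

definition is_atom :: "'a measure \<Rightarrow> 'a set \<Rightarrow> bool" where
  "is_atom M A \<longleftrightarrow> A \<in> sets M \<and> emeasure M A > 0 \<and>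
     (\<forall>B\<in>sets M. B \<subseteq> A \<longrightarrow> emeasure M B = 0 \<or> emeasure M (A - B) = 0)"

definition atomless :: "'a measure \<Rightarrow> bool" where
  "atomless M \<longleftrightarrow> (\<nexists>A. is_atom M A)"

end

theory Submission
  imports Defs
begin

lemma powr_superadd:
  fixes A B q :: real assumes "q \<ge> 1" "A \<ge> 0" "B \<ge> 0"
  shows "A powr q + B powr q \<le> (A+B) powr q"
proof (cases "A + B = 0")
  case True then have "A = 0" "B = 0" using assms by auto
  then show ?thesis by simp
next
  case False
  define S where "S = A + B"
  have S: "S > 0" using False assms S_def by auto
  have a1: "(A/S) powr q \<le> A/S"
  proof -
    have "(A/S) powr q \<le> (A/S) powr 1"
      using assms S S_def by (intro powr_mono') auto
    then show ?thesis using assms S by simp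
  qed
  have b1: "(B/S) powr q \<le> B/S"
  proof -
    have "(B/S) powr q \<le> (B/S) powr 1"
      using assms S S_def by (intro powr_mono') auto
    then show ?thesis using assms S by simp
  qed
  have "A powr q = S powr q * (A/S) powr q" using S assms by (simp add: powr_divide)
  moreover have "B powr q = S powr q * (B/S) powr q" using S assms by (simp add: powr_divide)
  moreover have "S powr q * (A/S) powr q + S powr q * (B/S) powr q \<le> S powr q * (A/S) + S powr q * (B/S)"
    by (rule add_mono[OF mult_left_mono[OF a1] mult_left_mono[OF b1]]) auto
  ultimately have "A powr q + B powr q \<le> S powr q * (A/S) + S powr q * (B/S)"
    by simp
  also have "\<dots> = S powr q * ((A + B)/S)" by (simp add: add_divide_distrib ring_distribs)
  also have "(A + B)/S = 1" using S S_def by simp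
  finally show ?thesis using S_def by simp
qed

lemma powr_midconv:
  fixes A B q :: real assumes "q \<ge> 1" "A \<ge> 0" "B \<ge> 0"
  shows "((A+B)/2) powr q \<le> (A powr q + B powr q)/2"
proof (cases "A > 0 \<and> B > 0")
  case True
  have "((1 - 1/2) *\<^sub>R A + (1/2) *\<^sub>R B) powr q \<le> (1 - 1/2) * A powr q + (1/2) * B powr q"
    using convex_onD[OF powr_convex[OF assms(1)], of "1/2" A B] True by auto
  note H = this
  have e1: "(1 - 1/2) *\<^sub>R A + (1/2) *\<^sub>R B = (A+B)/2" by simp
  have e2: "(1 - 1/2) * A powr q + (1/2) * B powr q = (A powr q + B powr q)/2"
  proof -
    have "(1 - 1/2) * A powr q + (1/2) * B powr q = (1/2) * (A powr q + B powr q)"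
      by (simp only: distrib_left) simp
    then show ?thesis by simp
  qed
  show ?thesis using H unfolding e1 e2 .
next
  case False
  have "(2::real) powr 1 \<le> 2 powr q" by (rule powr_mono) (use assms(1) in auto)
  then have two: "2 powr q \<ge> 2" by simp
  have key: "(C/2) powr q \<le> C powr q / 2" if "C \<ge> 0" for C :: real
  proof -
    have "(C/2) powr q = C powr q / 2 powr q" using that by (simp add: powr_divide)
    also have "\<dots> \<le> C powr q / 2" using two by (intro divide_left_mono) auto
    finally show ?thesis .
  qed
  from False assms have "A = 0 \<or> B = 0" by auto
  then show ?thesis using key[of A] key[of B] assms by auto
qed

lemma abs_powr_sq:
  fixes z p :: real assumes "p > 0"
  shows "\<bar>z\<bar> powr p = (z^2) powr (p/2)"
proof -
  have e: "\<bar>z\<bar> powr 2 = z^2" by (cases "z = 0") (auto simp: powr_realpow)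
  have "(\<bar>z\<bar> powr 2) powr (p/2) = \<bar>z\<bar> powr (2*(p/2))" by (rule powr_powr)
  then have "\<bar>z\<bar> powr p = (\<bar>z\<bar> powr 2) powr (p/2)" by simp
  then show ?thesis unfolding e .
qed

lemma clarkson_pt:
  fixes s t p :: real assumes "p \<ge> 2"
  shows "\<bar>s+t\<bar> powr p + \<bar>s-t\<bar> powr p \<le> 2 powr (p-1) * (\<bar>s\<bar> powr p + \<bar>t\<bar> powr p)"
proof -
  define q where "q = p/2"
  have q: "q \<ge> 1" using assms q_def by auto
  have p0: "p > 0" using assms by auto
  define m where "m = (s^2 + t^2)/2"
  have m0: "m \<ge> 0" unfolding m_def by (intro divide_nonneg_nonneg add_nonneg_nonneg) auto
  have "\<bar>s+t\<bar> powr p + \<bar>s-t\<bar> powr p = ((s+t)^2) powr q + ((s-t)^2) powr q"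
    using abs_powr_sq[OF p0] by (simp add: q_def)
  also have "\<dots> \<le> ((s+t)^2 + (s-t)^2) powr q" by (rule powr_superadd) (use q in auto)
  also have "(s+t)^2 + (s-t)^2 = 4 * m" by (simp add: m_def power2_eq_square algebra_simps)
  also have "(4 * m) powr q = 4 powr q * m powr q" using m0 by (simp add: powr_mult)
  also have "4 powr q = 2 powr p"
  proof -
    have "(4::real) powr q = (2 powr 2) powr q" by simp
    also have "\<dots> = 2 powr (2*q)" by (rule powr_powr)
    finally have "(4::real) powr q = 2 powr (2*q)" .
    moreover have "2*q = p" using q_def by simp
    ultimately show ?thesis by (simp only:)
  qed
  also have "m powr q \<le> ((s^2) powr q + (t^2) powr q)/2"
    unfolding m_def by (rule powr_midconv) (use q in auto)
  also have "(s^2) powr q = \<bar>s\<bar> powr p" using abs_powr_sq[OF p0, of s] unfolding q_def by simp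
  also have "(t^2) powr q = \<bar>t\<bar> powr p" using abs_powr_sq[OF p0, of t] unfolding q_def by simp
  also have "2 powr p * ((\<bar>s\<bar> powr p + \<bar>t\<bar> powr p)/2) = 2 powr (p-1) * (\<bar>s\<bar> powr p + \<bar>t\<bar> powr p)"
    by (simp add: powr_diff)
  finally show ?thesis by simp
qed

lemma final_real:
  fixes A B c p :: real
  assumes "p > 1" "c > 0" "A \<ge> 0" "B \<ge> 0" "A + B \<le> (2*c) powr p"
  shows "A powr (1/p) / c + B / (p * 2 powr p * c powr p) \<le> 2"
proof -
  define K where "K = (2*c) powr p"
  have K: "K > 0" using K_def assms by simp
  define u where "u = A / K"
  define v where "v = B / K"
  have u0: "u \<ge> 0" and v0: "v \<ge> 0" using u_def v_def K assms by auto
  have uv: "u + v \<le> 1" using assms K u_def v_def by (simp add: K_def add_divide_distrib[symmetric])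
  have Kp: "K powr (1/p) = 2*c" using K_def assms by (simp add: powr_powr)
  have "A = K * u" using K u_def by simp
  then have "A powr (1/p) = (K * u) powr (1/p)" by simp
  also have "\<dots> = K powr (1/p) * u powr (1/p)" by (rule powr_mult)
  finally have "A powr (1/p) = K powr (1/p) * u powr (1/p)" .
  then have "A powr (1/p) / c = (2*c) * u powr (1/p) / c" by (simp only: Kp)
  then have Ae: "A powr (1/p) / c = 2 * u powr (1/p)" using assms(2) by simp
  have young: "u powr (1/p) \<le> u/p + (1 - 1/p)"
  proof (cases "u = 0")
    case True then show ?thesis using assms by simp
  next
    case False
    have "u powr (1/p) * 1 powr (1 - 1/p) \<le> (1/p)*u + (1 - 1/p)*1"
      by (rule Youngs_inequality_0) (use assms False u0 in auto)
    then show ?thesis by simp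
  qed
  have Be: "B / (p * 2 powr p * c powr p) = v / p"
    using K_def assms v_def by (simp add: powr_mult field_simps)
  have "2 * u powr (1/p) + v/p \<le> 2 * (u/p + (1 - 1/p)) + v/p" using young by simp
  also have "\<dots> \<le> 2" using uv assms v0
    by (simp add: field_simps)
  finally show ?thesis using Ae Be by simp
qed

lemma F_bound:
  fixes c p :: real and M :: "'a measure" and x :: "'a \<Rightarrow> real"
  assumes "p > 0" "c > 0" "lp_norm M p x / ennreal c \<le> 1"
  shows "(\<integral>\<^sup>+ z. ennreal (\<bar>x z\<bar> powr p) \<partial>M) \<le> ennreal (c powr p)"
proof -
  define F where "F = (\<integral>\<^sup>+ z. ennreal (\<bar>x z\<bar> powr p) \<partial>M)"
  have "lp_norm M p x = lp_norm M p x * (ennreal c / ennreal c)" using assms(2) by simp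
  also have "\<dots> = lp_norm M p x / ennreal c * ennreal c" by (simp add: ennreal_divide_times)
  also have "\<dots> \<le> 1 * ennreal c" by (rule mult_right_mono) (use assms in auto)
  finally have le: "lp_norm M p x \<le> ennreal c" by simp
  show ?thesis
  proof (cases "F = \<infinity>")
    case True
    then have "lp_norm M p x = \<infinity>" unfolding lp_norm_def epowr_def F_def by simp
    then show ?thesis using le by (simp add: top_unique)
  next
    case False
    then obtain X where X: "F = ennreal X" "X \<ge> 0" by (cases F) auto
    then have "lp_norm M p x = ennreal (X powr (1/p))" unfolding lp_norm_def epowr_def F_def[symmetric] by simp
    with le have "X powr (1/p) \<le> c" using assms(2) by (simp add: ennreal_le_iff)
    then have "(X powr (1/p)) powr p \<le> c powr p" by (intro powr_mono2) (use assms in auto)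
    then have "X \<le> c powr p" using X assms by (simp add: powr_powr)
    then show ?thesis using X F_def by simp
  qed
qed

lemma per_p:
  fixes p :: real and M :: "'a measure" and x y :: "'a \<Rightarrow> real" and \<psi> :: ennreal
  assumes p: "p > 2" and psi: "\<psi> > 0"
    and xm: "x \<in> borel_measurable M" and ym: "y \<in> borel_measurable M"
    and xb: "lp_norm M p x / \<psi> \<le> 1" and yb: "lp_norm M p y / \<psi> \<le> 1"
  shows "lp_norm M p (\<lambda>z. x z + y z) / \<psi>
     + epowr (lp_norm M p (\<lambda>z. x z - y z)) p / (ennreal p * ennreal (2 powr p) * epowr \<psi> p) \<le> 2"
proof (cases "\<psi> = \<infinity>")
  case True
  have "ennreal p * ennreal (2 powr p) * epowr \<psi> p = \<infinity>"
    using True p by (simp add: epowr_def ennreal_mult_top)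
  then show ?thesis using True by simp
next
  case False
  then obtain c where c: "\<psi> = ennreal c" "c > 0" using psi by (cases \<psi>) auto
  have p0: "p > 0" using p by simp
  define F where "F u = (\<integral>\<^sup>+ z. ennreal (\<bar>u z\<bar> powr p) \<partial>M)" for u :: "'a \<Rightarrow> real"
  have Fx: "F x \<le> ennreal (c powr p)" unfolding F_def by (rule F_bound) (use p0 c xb in auto)
  have Fy: "F y \<le> ennreal (c powr p)" unfolding F_def by (rule F_bound) (use p0 c yb in auto)
  have [measurable]: "x \<in> borel_measurable M" "y \<in> borel_measurable M" using xm ym by auto
  have m1: "(\<lambda>z. ennreal (\<bar>x z + y z\<bar> powr p)) \<in> borel_measurable M" by measurable
  have m2: "(\<lambda>z. ennreal (\<bar>x z\<bar> powr p)) \<in> borel_measurable M" by measurable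
  have m3: "(\<lambda>z. ennreal (\<bar>x z - y z\<bar> powr p)) \<in> borel_measurable M" by measurable
  have m4: "(\<lambda>z. ennreal (\<bar>y z\<bar> powr p)) \<in> borel_measurable M" by measurable
  have "F (\<lambda>z. x z + y z) + F (\<lambda>z. x z - y z)
      = (\<integral>\<^sup>+ z. ennreal (\<bar>x z + y z\<bar> powr p) + ennreal (\<bar>x z - y z\<bar> powr p) \<partial>M)"
    unfolding F_def by (rule nn_integral_add[symmetric]) (auto intro: m1 m3)
  also have "\<dots> \<le> (\<integral>\<^sup>+ z. ennreal (2 powr (p-1)) * (ennreal (\<bar>x z\<bar> powr p) + ennreal (\<bar>y z\<bar> powr p)) \<partial>M)"
  proof (rule nn_integral_mono)
    fix z
    have "\<bar>x z + y z\<bar> powr p + \<bar>x z - y z\<bar> powr p \<le> 2 powr (p-1) * (\<bar>x z\<bar> powr p + \<bar>y z\<bar> powr p)"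
      by (rule clarkson_pt) (use p in auto)
    then have "ennreal (\<bar>x z + y z\<bar> powr p + \<bar>x z - y z\<bar> powr p) \<le> ennreal (2 powr (p-1) * (\<bar>x z\<bar> powr p + \<bar>y z\<bar> powr p))"
      by (rule ennreal_leI)
    then show "ennreal (\<bar>x z + y z\<bar> powr p) + ennreal (\<bar>x z - y z\<bar> powr p) \<le> ennreal (2 powr (p-1)) * (ennreal (\<bar>x z\<bar> powr p) + ennreal (\<bar>y z\<bar> powr p))"
      using ennreal_plus[of "\<bar>x z + y z\<bar> powr p" "\<bar>x z - y z\<bar> powr p"]
        ennreal_plus[of "\<bar>x z\<bar> powr p" "\<bar>y z\<bar> powr p"]
        ennreal_mult''[of "\<bar>x z\<bar> powr p + \<bar>y z\<bar> powr p" "2 powr (p-1)"] by simp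
  qed
  also have "\<dots> = ennreal (2 powr (p-1)) * (F x + F y)"
  proof -
    have "(\<integral>\<^sup>+ z. ennreal (\<bar>x z\<bar> powr p) + ennreal (\<bar>y z\<bar> powr p) \<partial>M) = F x + F y"
      unfolding F_def by (rule nn_integral_add) (rule m2, rule m4)
    moreover have "(\<integral>\<^sup>+ z. ennreal (2 powr (p-1)) * (ennreal (\<bar>x z\<bar> powr p) + ennreal (\<bar>y z\<bar> powr p)) \<partial>M)
       = ennreal (2 powr (p-1)) * (\<integral>\<^sup>+ z. ennreal (\<bar>x z\<bar> powr p) + ennreal (\<bar>y z\<bar> powr p) \<partial>M)"
      by (rule nn_integral_cmult) measurable
    ultimately show ?thesis by simp
  qed
  also have "\<dots> \<le> ennreal (2 powr (p-1)) * (ennreal (c powr p) + ennreal (c powr p))"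
    by (intro mult_left_mono add_mono Fx Fy) auto
  also have "\<dots> = ennreal ((2*c) powr p)"
  proof -
    have h1: "2 powr (p-1) * (c powr p + c powr p) = (2 powr (p-1) * 2) * c powr p" by simp
    have h2: "2 powr (p-1) * 2 = (2::real) powr p" by (simp add: powr_diff)
    have h3: "(2*c) powr p = 2 powr p * c powr p" by (rule powr_mult)
    have h: "2 powr (p-1) * (c powr p + c powr p) = (2*c) powr p" unfolding h1 h2 h3 ..
    have "ennreal (c powr p) + ennreal (c powr p) = ennreal (c powr p + c powr p)"
      by (rule ennreal_plus[symmetric]) auto
    moreover have "ennreal (2 powr (p-1)) * ennreal (c powr p + c powr p) = ennreal (2 powr (p-1) * (c powr p + c powr p))"
      by (rule ennreal_mult''[symmetric]) auto
    ultimately show ?thesis using h by simp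
  qed
  finally have sum: "F (\<lambda>z. x z + y z) + F (\<lambda>z. x z - y z) \<le> ennreal ((2*c) powr p)" .
  have f1: "F (\<lambda>z. x z + y z) \<noteq> \<infinity>"
  proof
    assume "F (\<lambda>z. x z + y z) = \<infinity>"
    then have "F (\<lambda>z. x z + y z) + F (\<lambda>z. x z - y z) = \<infinity>" by simp
    with sum show False by (simp add: top_unique)
  qed
  have f2: "F (\<lambda>z. x z - y z) \<noteq> \<infinity>"
  proof
    assume "F (\<lambda>z. x z - y z) = \<infinity>"
    then have "F (\<lambda>z. x z + y z) + F (\<lambda>z. x z - y z) = \<infinity>" by simp
    with sum show False by (simp add: top_unique)
  qed
  obtain A where A: "F (\<lambda>z. x z + y z) = ennreal A" "A \<ge> 0"
    using f1 by (cases "F (\<lambda>z. x z + y z)" rule: ennreal_cases) auto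
  obtain B where B: "F (\<lambda>z. x z - y z) = ennreal B" "B \<ge> 0"
    using f2 by (cases "F (\<lambda>z. x z - y z)" rule: ennreal_cases) auto
  have AB: "A + B \<le> (2*c) powr p" using sum A B by (simp add: ennreal_plus[symmetric] del: ennreal_plus)
  have n1: "lp_norm M p (\<lambda>z. x z + y z) = ennreal (A powr (1/p))"
    using A unfolding lp_norm_def epowr_def F_def[symmetric] by simp
  have n2: "lp_norm M p (\<lambda>z. x z - y z) = ennreal (B powr (1/p))"
    using B unfolding lp_norm_def epowr_def F_def[symmetric] by simp
  have e2: "epowr (ennreal (B powr (1/p))) p = ennreal B"
    using B p0 by (simp add: epowr_def powr_powr)
  have e3: "epowr \<psi> p = ennreal (c powr p)" using c by (simp add: epowr_def)
  have den: "ennreal p * ennreal (2 powr p) * ennreal (c powr p) = ennreal (p * 2 powr p * c powr p)"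
    using p0 by (simp add: ennreal_mult)
  have t1: "lp_norm M p (\<lambda>z. x z + y z) / \<psi> = ennreal (A powr (1/p) / c)"
    using n1 c by (simp add: divide_ennreal)
  have t2: "epowr (lp_norm M p (\<lambda>z. x z - y z)) p / (ennreal p * ennreal (2 powr p) * epowr \<psi> p)
      = ennreal (B / (p * 2 powr p * c powr p))"
    using n2 e2 e3 den c p0 B by (simp add: divide_ennreal)
  have "A powr (1/p) / c + B / (p * 2 powr p * c powr p) \<le> 2"
    by (rule final_real) (use p c A B AB in auto)
  note r = this
  have "ennreal (A powr (1/p) / c) + ennreal (B / (p * 2 powr p * c powr p))
      = ennreal (A powr (1/p) / c + B / (p * 2 powr p * c powr p))"
    by (rule ennreal_plus[symmetric]) (use c p0 B in auto)
  also have "\<dots> \<le> ennreal 2" by (rule ennreal_leI) (rule r)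
  finally show ?thesis using t1 t2 by simp
qed

theorem theorem3p1:
  fixes M :: "'a measure" and a b :: real and \<psi> :: "real \<Rightarrow> ennreal"
    and x y :: "'a \<Rightarrow> real"
  assumes "atomless M" and "emeasure M (space M) > 0"
    and "2 < a" and "a < b"
    and "\<forall>p\<in>{a<..<b}. \<psi> p > 0"
    and "(INF p\<in>{a<..<b}. \<psi> p) > 0"
    and "x \<in> GLS M a b \<psi>" and "gls_norm M a b \<psi> x \<le> 1"
    and "y \<in> GLS M a b \<psi>" and "gls_norm M a b \<psi> y \<le> 1"
  shows "enn2ereal (gls_norm M a b \<psi> (\<lambda>z. x z + y z))
           \<le> 2 - enn2ereal (gls_theta M a b \<psi> (\<lambda>z. x z - y z))"
proof -
  have ne: "{a<..<b} \<noteq> {}" using assms(4) by auto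
  have xm: "x \<in> borel_measurable M" using assms(7) by (simp add: GLS_def)
  have ym: "y \<in> borel_measurable M" using assms(9) by (simp add: GLS_def)
  define \<theta> where "\<theta> = gls_theta M a b \<psi> (\<lambda>z. x z - y z)"
  have each: "lp_norm M p (\<lambda>z. x z + y z) / \<psi> p + \<theta> \<le> 2" if p: "p \<in> {a<..<b}" for p
  proof -
    have th: "\<theta> \<le> epowr (lp_norm M p (\<lambda>z. x z - y z)) p / (ennreal p * ennreal (2 powr p) * epowr (\<psi> p) p)"
      unfolding \<theta>_def gls_theta_def by (rule INF_lower) (rule p)
    have "lp_norm M p x / \<psi> p \<le> gls_norm M a b \<psi> x"
      unfolding gls_norm_def by (rule SUP_upper) (rule p)
    then have xb: "lp_norm M p x / \<psi> p \<le> 1" using assms(8) by simp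
    have "lp_norm M p y / \<psi> p \<le> gls_norm M a b \<psi> y"
      unfolding gls_norm_def by (rule SUP_upper) (rule p)
    then have yb: "lp_norm M p y / \<psi> p \<le> 1" using assms(10) by simp
    have "lp_norm M p (\<lambda>z. x z + y z) / \<psi> p + \<theta>
        \<le> lp_norm M p (\<lambda>z. x z + y z) / \<psi> p
          + epowr (lp_norm M p (\<lambda>z. x z - y z)) p / (ennreal p * ennreal (2 powr p) * epowr (\<psi> p) p)"
      using th by (rule add_left_mono)
    also have "\<dots> \<le> 2"
      by (rule per_p) (use p assms(3,5) xm ym xb yb in auto)
    finally show ?thesis .
  qed
  have G: "gls_norm M a b \<psi> (\<lambda>z. x z + y z) + \<theta> \<le> 2"
    unfolding gls_norm_def ennreal_SUP_add_left[OF ne, symmetric]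
    by (rule SUP_least) (rule each)
  define G' where "G' = gls_norm M a b \<psi> (\<lambda>z. x z + y z)"
  have G2: "G' + \<theta> \<le> 2" using G G'_def by simp
  have "G' \<noteq> \<infinity>" using G2 by (auto simp: top_unique)
  then obtain g where g: "G' = ennreal g" "g \<ge> 0" by (cases G' rule: ennreal_cases) auto
  have "\<theta> \<noteq> \<infinity>" using G2 by (auto simp: top_unique)
  then obtain t where t: "\<theta> = ennreal t" "t \<ge> 0" by (cases \<theta> rule: ennreal_cases) auto
  have "ennreal (g + t) \<le> ennreal 2" using G2 g t by (simp add: ennreal_plus)
  then have gt: "g + t \<le> 2" using ennreal_le_iff[of 2 "g + t"] by simp
  have "enn2ereal G' \<le> 2 - enn2ereal \<theta>"
    using g t gt by simp
  then show ?thesis unfolding G'_def \<theta>_def .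
qed

end
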